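(* For any symmetric matrices $M_1,\dots,M_N\in\mathbb{R}^{d\times d}$ and vectors $\bar z_1,\dots,\bar z_N\in\mathbb{R}^d$, there exist differentiable functions $f_1,\dots,f_N:\mathbb{R}^d\to\mathbb{R}$ such that (1) each $f_n$ is $M_n$-matrix-smooth and has a stationary point at $\bar z_n$, and (2) for every standardized $s$ on $\mathbb{R}^d$ with $\mathbb{E}[\mathsf{u}_i^4]=\kappa<\infty$, every distribution $\pi$ on $\{1,\dots,N\}$ with all $\pi(n)>0$, and every $w=(m,C)$, the estimator $\mathsf{g}=\frac{1}{\pi(\mathsf{n})}\nabla_w f_{\mathsf{n}}(T_w(\mathsf{u}))$ (with $\mathsf{u}\sim s$ and $\mathsf{n}\sim\pi$ independent) satisfies \[ \operatorname{tr}\mathbb{V}[\mathsf{g}]\ \ge\ \sum_{n=1}^N\frac{1}{\pi(n)}\Big(d\,\|M_n(m-\bar z_n)\|_2^2+(d+\kappa-1)\|M_nC\|_F^2\Big). \]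
   Context: $\mathbb{V}[\mathsf{g}]$ is the covariance matrix of the random vector $\mathsf{g}$, so $\operatorname{tr}\mathbb{V}[\mathsf{g}]=\mathbb{E}\|\mathsf{g}\|_2^2-\|\mathbb{E}\mathsf{g}\|_2^2$. For a symmetric matrix $M$, $f$ is $M$-matrix-smooth if $\|\nabla f(y)-\nabla f(z)\|_2\le\|M(y-z)\|_2$ for all $y,z$. $T_w(u)=Cu+m$ for $w=(m,C)$, $m\in\mathbb{R}^d$, $C\in\mathbb{R}^{d\times d}$, with $w$ regarded as the vector of all $d+d^2$ entries and $\nabla_w$ the gradient with respect to them. A distribution $s$ on $\mathbb{R}^d$ is standardized if for $\mathsf{u}\sim s$ the components are i.i.d. with $\mathbb{E}\mathsf{u}_1=\mathbb{E}\mathsf{u}_1^3=0$ and $\mathrm{Var}(\mathsf{u}_1)=1$. $\|\cdot\|_F$ is the Frobenius norm. *)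

theory Defs
  imports "HOL-Probability.Probability"
begin

text \<open>Gradient of a real-valued function on a real inner product space (well defined
  when the function is differentiable).\<close>
definition grad :: "('a::real_inner \<Rightarrow> real) \<Rightarrow> 'a \<Rightarrow> 'a" where
  "grad f x = (THE D. GDERIV f x :> D)"

definition symmetric_mat :: "real^'d^'d \<Rightarrow> bool" where
  "symmetric_mat M \<longleftrightarrow> transpose M = M"

definition matrix_smooth :: "real^'d^'d \<Rightarrow> (real^'d \<Rightarrow> real) \<Rightarrow> bool" where
  "matrix_smooth M f \<longleftrightarrow> (\<forall>y z. norm (grad f y - grad f z) \<le> norm (M *v (y - z)))"

definition T_aff :: "(real^'d) \<times> (real^'d^'d) \<Rightarrow> real^'d \<Rightarrow> real^'d" where
  "T_aff w u = snd w *v u + fst w"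

definition grad_w :: "(real^'d \<Rightarrow> real) \<Rightarrow> (real^'d) \<times> (real^'d^'d) \<Rightarrow> real^'d
    \<Rightarrow> (real^'d) \<times> (real^'d^'d)" where
  "grad_w f w u = grad (\<lambda>w'. f (T_aff w' u)) w"

definition frob_norm :: "real^'d^'d \<Rightarrow> real" where
  "frob_norm A = sqrt (\<Sum>i\<in>UNIV. \<Sum>j\<in>UNIV. (A $ i $ j)^2)"

definition standardized :: "(real^'d) measure \<Rightarrow> real \<Rightarrow> bool" where
  "standardized s \<kappa> \<longleftrightarrow>
     prob_space s \<and> sets s = sets borel \<and>
     prob_space.indep_vars s (\<lambda>_. borel) (\<lambda>i u. u $ i) UNIV \<and>
     (\<forall>i j. distr s borel (\<lambda>u. u $ i) = distr s borel (\<lambda>u. u $ j)) \<and>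
     (\<forall>i. integrable s (\<lambda>u. (u $ i)^4) \<and>
          (\<integral>u. u $ i \<partial>s) = 0 \<and> (\<integral>u. (u $ i)^3 \<partial>s) = 0 \<and>
          (\<integral>u. (u $ i)^2 \<partial>s) = 1 \<and> (\<integral>u. (u $ i)^4 \<partial>s) = \<kappa>)"

definition pos_distribution :: "('k::finite \<Rightarrow> real) \<Rightarrow> bool" where
  "pos_distribution p \<longleftrightarrow> (\<forall>n. p n > 0) \<and> sum p UNIV = 1"

definition estimator :: "('k \<Rightarrow> real^'d \<Rightarrow> real) \<Rightarrow> ('k \<Rightarrow> real) \<Rightarrow>
    (real^'d) \<times> (real^'d^'d) \<Rightarrow> real^'d \<Rightarrow> 'k \<Rightarrow> (real^'d) \<times> (real^'d^'d)" where
  "estimator f p w u n = (1 / p n) *\<^sub>R grad_w (f n) w u"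

text \<open>tr V[g] = E||g||^2 - ||E g||^2, where u ~ s and n ~ p independently.\<close>
definition trace_var :: "(real^'d) measure \<Rightarrow> ('k::finite \<Rightarrow> real) \<Rightarrow>
    (real^'d \<Rightarrow> 'k \<Rightarrow> (real^'d) \<times> (real^'d^'d)) \<Rightarrow> real" where
  "trace_var s p g =
     (\<Sum>n\<in>UNIV. p n * (\<integral>u. (norm (g u n))^2 \<partial>s))
     - (norm (\<Sum>n\<in>UNIV. p n *\<^sub>R (\<integral>u. g u n \<partial>s)))^2"

end

theory Submission imports Defs begin

definition mom :: "real \<Rightarrow> nat \<Rightarrow> real" where
  "mom \<kappa> k = (if k = 0 then 1 else if k = 2 then 1 else if k = 4 then \<kappa> else 0)"

lemma pow_le_bound: "k \<le> 4 \<Longrightarrow> \<bar>(x::real)\<bar>^k \<le> 1 + x^4"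
proof (cases "\<bar>x\<bar> \<le> 1")
  case True
  assume "k \<le> 4"
  have "\<bar>x\<bar>^k \<le> 1" using True by (simp add: power_le_one)
  moreover have "x^4 \<ge> 0" by (simp add: zero_le_even_power)
  ultimately show ?thesis by linarith
next
  case False
  assume k: "k \<le> 4"
  have "\<bar>x\<bar>^k \<le> \<bar>x\<bar>^4" using False k by (intro power_increasing) auto
  also have "\<dots> = x^4" by (simp add: power_abs zero_le_even_power)
  finally show ?thesis by linarith
qed

lemma std_meas:
  assumes "sets s = sets (borel :: (real^'d) measure)"
  shows "(\<lambda>u::real^'d. (u$i)^k) \<in> borel_measurable s"
proof -
  have "(\<lambda>u::real^'d. (u$i)^k) \<in> borel_measurable borel"
    by (intro borel_measurable_continuous_onI continuous_intros)
  thus ?thesis by (subst measurable_cong_sets[OF assms refl])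
qed

lemma std_comp:
  assumes "standardized s \<kappa>" "k \<le> 4"
  shows "integrable s (\<lambda>u::real^'d. (u$i)^k)" "(\<integral>u. (u$i)^k \<partial>s) = mom \<kappa> k"
proof -
  interpret prob_space s using assms(1) by (simp add: standardized_def)
  have st: "sets s = sets borel" "integrable s (\<lambda>u. (u $ i)^4)"
     "(\<integral>u. u $ i \<partial>s) = 0" "(\<integral>u. (u $ i)^3 \<partial>s) = 0"
     "(\<integral>u. (u $ i)^2 \<partial>s) = 1" "(\<integral>u. (u $ i)^4 \<partial>s) = \<kappa>"
    using assms(1) unfolding standardized_def by auto
  show int: "integrable s (\<lambda>u::real^'d. (u$i)^k)"
  proof (rule Bochner_Integration.integrable_bound[where f="\<lambda>u. 1 + (u$i)^4"])
    show "integrable s (\<lambda>u. 1 + (u$i)^4)" using st(2) by simp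
    show "(\<lambda>u::real^'d. (u$i)^k) \<in> borel_measurable s" by (rule std_meas[OF st(1)])
    show "AE x in s. norm ((x $ i) ^ k) \<le> norm (1 + (x $ i) ^ 4)"
      using pow_le_bound[OF assms(2)] by (auto simp: power_abs intro!: AE_I2)
  qed
  have "k = 0 \<or> k = 1 \<or> k = 2 \<or> k = 3 \<or> k = 4" using assms(2) by auto
  then show "(\<integral>u. (u$i)^k \<partial>s) = mom \<kappa> k"
    using st by (auto simp: mom_def prob_space)
qed

lemma mono_moment:
  fixes e :: "'d::finite \<Rightarrow> nat"
  assumes "standardized s \<kappa>" "\<And>i. e i \<le> 4"
  shows "integrable s (\<lambda>u::real^'d. \<Prod>i\<in>UNIV. (u$i)^(e i))"
    "(\<integral>u. (\<Prod>i\<in>UNIV. (u$i)^(e i)) \<partial>s) = (\<Prod>i\<in>UNIV. mom \<kappa> (e i))"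
proof -
  interpret prob_space s using assms(1) by (simp add: standardized_def)
  have ind: "indep_vars (\<lambda>_. borel) (\<lambda>i u. u $ i) UNIV"
    using assms(1) unfolding standardized_def by auto
  have ind2: "indep_vars (\<lambda>_. borel) (\<lambda>i u::real^'d. (u $ i)^(e i)) UNIV"
    by (rule indep_vars_compose2[OF ind]) (intro borel_measurable_continuous_onI continuous_intros)
  show "integrable s (\<lambda>u::real^'d. \<Prod>i\<in>UNIV. (u$i)^(e i))"
    by (rule indep_vars_integrable[OF _ ind2]) (auto intro: std_comp[OF assms(1) assms(2)])
  have "(\<integral>u. (\<Prod>i\<in>UNIV. (u$i)^(e i)) \<partial>s) = (\<Prod>i\<in>UNIV. \<integral>u. (u$i)^(e i) \<partial>s)"
    by (rule indep_vars_lebesgue_integral[OF _ ind2]) (auto intro: std_comp[OF assms(1) assms(2)])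
  also have "\<dots> = (\<Prod>i\<in>UNIV. mom \<kappa> (e i))"
    by (intro prod.cong refl std_comp[OF assms(1) assms(2)])
  finally show "(\<integral>u. (\<Prod>i\<in>UNIV. (u$i)^(e i)) \<partial>s) = (\<Prod>i\<in>UNIV. mom \<kappa> (e i))" .
qed

definition ex :: "'d list \<Rightarrow> 'd \<Rightarrow> nat" where
  "ex xs i = length (filter ((=) i) xs)"

lemma ex_le: "ex xs i \<le> length xs"
  unfolding ex_def by simp

lemma prod_ex: "(\<Prod>i\<in>UNIV. (u$i)^(ex xs i)) = prod_list (map (\<lambda>j. u$j) xs)"
  for u :: "'a::comm_monoid_mult^'d::finite"
proof (induction xs)
  case Nil then show ?case by (simp add: ex_def)
next
  case (Cons x xs)
  have "(\<Prod>i\<in>UNIV. (u$i)^(ex (x#xs) i)) = (\<Prod>i\<in>UNIV. (if i = x then u$i else 1) * (u$i)^(ex xs i))"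
    by (intro prod.cong refl) (auto simp: ex_def)
  also have "\<dots> = u$x * (\<Prod>i\<in>UNIV. (u$i)^(ex xs i))"
    by (simp add: prod.distrib prod.delta)
  finally show ?case using Cons by simp
qed

lemma list_moment:
  assumes "standardized s \<kappa>" "length xs \<le> 4"
  shows "integrable s (\<lambda>u::real^'d::finite. prod_list (map (\<lambda>j. u$j) xs))"
    "(\<integral>u. prod_list (map (\<lambda>j. u$j) xs) \<partial>s) = (\<Prod>i\<in>UNIV. mom \<kappa> (ex xs i))"
  using mono_moment[OF assms(1), of "ex xs"] ex_le[of xs] assms(2)
  by (auto simp: prod_ex intro: le_trans)

lemma prod_mom_zero: "mom \<kappa> (e j) = 0 \<Longrightarrow> (\<Prod>i\<in>(UNIV::'d::finite set). mom \<kappa> (e i)) = 0"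
  by (rule prod_zero) auto

lemma prod_mom_one: "(\<And>i. i \<noteq> j \<Longrightarrow> e i = 0) \<Longrightarrow> (\<Prod>i\<in>(UNIV::'d::finite set). mom \<kappa> (e i)) = mom \<kappa> (e j)"
  by (subst prod.remove[of _ j]) (auto simp: mom_def intro!: prod.neutral)

lemma prod_mom_two: "j \<noteq> l \<Longrightarrow> (\<And>i. i \<noteq> j \<Longrightarrow> i \<noteq> l \<Longrightarrow> e i = 0) \<Longrightarrow>
   (\<Prod>i\<in>(UNIV::'d::finite set). mom \<kappa> (e i)) = mom \<kappa> (e j) * mom \<kappa> (e l)"
  apply (subst prod.remove[of _ j], simp, simp)
  apply (subst prod.remove[of _ l], simp, simp)
  apply (subst prod.neutral) apply (auto simp: mom_def)
  done

lemma mom2: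
  assumes "standardized s \<kappa>"
  shows "integrable s (\<lambda>u::real^'d::finite. u$j * u$k)"
    "(\<integral>u. u$j * u$k \<partial>s) = (if j = k then 1 else 0)"
proof -
  show "integrable s (\<lambda>u::real^'d::finite. u$j * u$k)"
    using list_moment(1)[OF assms, of "[j,k]"] by simp
  have "(\<integral>u. u$j * u$k \<partial>s) = (\<Prod>i\<in>UNIV. mom \<kappa> (ex [j,k] i))"
    using list_moment(2)[OF assms, of "[j,k]"] by simp
  also have "\<dots> = (if j = k then 1 else 0)"
  proof (cases "j = k")
    case True
    then show ?thesis by (subst prod_mom_one[where j=j]) (auto simp: ex_def mom_def)
  next
    case False
    then show ?thesis by (subst prod_mom_zero[where j=j]) (auto simp: ex_def mom_def)
  qed
  finally show "(\<integral>u. u$j * u$k \<partial>s) = (if j = k then 1 else 0)" .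
qed

lemma mom3:
  assumes "standardized s \<kappa>"
  shows "integrable s (\<lambda>u::real^'d::finite. u$j * (u$l * u$l))"
    "(\<integral>u. u$j * (u$l * u$l) \<partial>s) = 0"
proof -
  show "integrable s (\<lambda>u::real^'d::finite. u$j * (u$l * u$l))"
    using list_moment(1)[OF assms, of "[j,l,l]"] by simp
  have "(\<integral>u. u$j * (u$l * u$l) \<partial>s) = (\<Prod>i\<in>UNIV. mom \<kappa> (ex [j,l,l] i))"
    using list_moment(2)[OF assms, of "[j,l,l]"] by simp
  also have "\<dots> = 0"
    by (rule prod_mom_zero[where j=j]) (auto simp: ex_def mom_def)
  finally show "(\<integral>u. u$j * (u$l * u$l) \<partial>s) = 0" .
qed

lemma mom4:
  assumes "standardized s \<kappa>"
  shows "integrable s (\<lambda>u::real^'d::finite. u$j * (u$k * (u$l * u$l)))"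
    "(\<integral>u. u$j * (u$k * (u$l * u$l)) \<partial>s) = (if j = k then (if j = l then \<kappa> else 1) else 0)"
proof -
  show "integrable s (\<lambda>u::real^'d::finite. u$j * (u$k * (u$l * u$l)))"
    using list_moment(1)[OF assms, of "[j,k,l,l]"] by simp
  have "(\<integral>u. u$j * (u$k * (u$l * u$l)) \<partial>s) = (\<Prod>i\<in>UNIV. mom \<kappa> (ex [j,k,l,l] i))"
    using list_moment(2)[OF assms, of "[j,k,l,l]"] by simp
  also have "\<dots> = (if j = k then (if j = l then \<kappa> else 1) else 0)"
  proof (cases "j = k")
    case True
    show ?thesis
    proof (cases "j = l")
      case True
      then show ?thesis using \<open>j = k\<close> by (subst prod_mom_one[where j=j]) (auto simp: ex_def mom_def)
    next
      case False
      then show ?thesis using \<open>j = k\<close> by (subst prod_mom_two[where j=j and l=l]) (auto simp: ex_def mom_def)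
    qed
  next
    case False
    show ?thesis
    proof (cases "j = l")
      case True
      then show ?thesis using False by (subst prod_mom_zero[where j=k]) (auto simp: ex_def mom_def)
    next
      case False
      then show ?thesis using \<open>j \<noteq> k\<close> by (subst prod_mom_zero[where j=j]) (auto simp: ex_def mom_def)
    qed
  qed
  finally show "(\<integral>u. u$j * (u$k * (u$l * u$l)) \<partial>s) = (if j = k then (if j = l then \<kappa> else 1) else 0)" .
qed

definition W :: "real^'d::finite \<Rightarrow> real" where
  "W u = 1 + (\<Sum>l\<in>UNIV. u$l * u$l)"

lemma mom1:
  assumes "standardized s \<kappa>"
  shows "integrable s (\<lambda>u::real^'d::finite. u$j)" "(\<integral>u. u$j \<partial>s) = 0"
  using std_comp[OF assms, of 1 j] by (auto simp: mom_def)

lemma W0: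
  assumes "standardized s \<kappa>"
  shows "integrable s (\<lambda>u::real^'d::finite. W u)" "(\<integral>u. W u \<partial>s) = 1 + real CARD('d)"
proof -
  interpret prob_space s using assms(1) by (simp add: standardized_def)
  have i: "\<And>l. integrable s (\<lambda>u::real^'d::finite. u$l * u$l)"
    using mom2(1)[OF assms] by blast
  show "integrable s (\<lambda>u::real^'d::finite. W u)"
    unfolding W_def using i by (intro Bochner_Integration.integrable_add integrable_sum) auto
  show "(\<integral>u. W u \<partial>s) = 1 + real CARD('d)"
    unfolding W_def using i mom2(2)[OF assms]
    by (subst Bochner_Integration.integral_add) (auto simp: integral_sum prob_space)
qed

lemma W1:
  assumes "standardized s \<kappa>"
  shows "integrable s (\<lambda>u::real^'d::finite. u$j * W u)" "(\<integral>u. u$j * W u \<partial>s) = 0"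
proof -
  have e: "(\<lambda>u::real^'d. u$j * W u) = (\<lambda>u. u$j + (\<Sum>l\<in>UNIV. u$j * (u$l * u$l)))"
    by (auto simp: W_def algebra_simps sum_distrib_left)
  show "integrable s (\<lambda>u::real^'d::finite. u$j * W u)"
    unfolding e using mom1[OF assms] mom3[OF assms] by (intro Bochner_Integration.integrable_add integrable_sum) auto
  show "(\<integral>u. u$j * W u \<partial>s) = 0"
    unfolding e using mom1[OF assms] mom3[OF assms]
    by (subst Bochner_Integration.integral_add) (auto simp: integral_sum)
qed

lemma sum_if_kappa: "(\<Sum>l\<in>(UNIV::'d::finite set). if j = l then \<kappa> else 1) = \<kappa> + real CARD('d) - 1"
proof -
  have "(\<Sum>l\<in>(UNIV::'d set). if j = l then \<kappa> else 1) = (\<Sum>l\<in>(UNIV::'d set). 1 + (if j = l then \<kappa> - 1 else 0))"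
    by (intro sum.cong) auto
  also have "\<dots> = real CARD('d) + (\<kappa> - 1)"
    by (simp add: sum.distrib)
  finally show ?thesis by simp
qed

lemma W2:
  assumes "standardized s \<kappa>"
  shows "integrable s (\<lambda>u::real^'d::finite. u$j * u$k * W u)"
    "(\<integral>u. u$j * u$k * W u \<partial>s) = (if j = k then real CARD('d) + \<kappa> else 0)"
proof -
  have e: "(\<lambda>u::real^'d. u$j * u$k * W u) = (\<lambda>u. u$j * u$k + (\<Sum>l\<in>UNIV. u$j * (u$k * (u$l * u$l))))"
    by (auto simp: W_def algebra_simps sum_distrib_left)
  show "integrable s (\<lambda>u::real^'d::finite. u$j * u$k * W u)"
    unfolding e using mom2[OF assms] mom4[OF assms] by (intro Bochner_Integration.integrable_add integrable_sum) auto
  have "(\<integral>u. u$j * u$k * W u \<partial>s) = (if j = k then 1 else 0) + (\<Sum>l\<in>UNIV. (if j = k then (if j = l then \<kappa> else 1) else 0))"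
    unfolding e using mom2[OF assms] mom4[OF assms]
    by (subst Bochner_Integration.integral_add) (auto simp: integral_sum)
  also have "\<dots> = (if j = k then real CARD('d) + \<kappa> else 0)"
    using sum_if_kappa[of j \<kappa>] by auto
  finally show "(\<integral>u. u$j * u$k * W u \<partial>s) = (if j = k then real CARD('d) + \<kappa> else 0)" .
qed

lemma QW:
  fixes \<beta> :: "real^'d::finite"
  assumes "standardized s \<kappa>"
  shows "integrable s (\<lambda>u::real^'d. (\<alpha> + (\<Sum>j\<in>UNIV. \<beta>$j * u$j))^2 * W u)"
    "(\<integral>u. (\<alpha> + (\<Sum>j\<in>UNIV. \<beta>$j * u$j))^2 * W u \<partial>s)
       = \<alpha>^2 * (1 + real CARD('d)) + (real CARD('d) + \<kappa>) * (\<Sum>j\<in>UNIV. (\<beta>$j)^2)"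
proof -
  have e: "(\<lambda>u::real^'d. (\<alpha> + (\<Sum>j\<in>UNIV. \<beta>$j * u$j))^2 * W u) =
     (\<lambda>u. \<alpha>^2 * W u + ((\<Sum>j\<in>UNIV. (2 * \<alpha> * \<beta>$j) * (u$j * W u)) +
        (\<Sum>j\<in>UNIV. \<Sum>k\<in>UNIV. (\<beta>$j * \<beta>$k) * (u$j * u$k * W u))))"
    by (auto simp: power2_eq_square algebra_simps sum_distrib_left sum_distrib_right sum.distrib
          intro!: ext)
  show "integrable s (\<lambda>u::real^'d. (\<alpha> + (\<Sum>j\<in>UNIV. \<beta>$j * u$j))^2 * W u)"
    unfolding e using W0[OF assms] W1[OF assms] W2[OF assms]
    by (intro Bochner_Integration.integrable_add integrable_sum integrable_mult_right) auto
  have "(\<integral>u. (\<alpha> + (\<Sum>j\<in>UNIV. \<beta>$j * u$j))^2 * W u \<partial>s) =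
     \<alpha>^2 * (1 + real CARD('d)) + (0 + (\<Sum>j\<in>UNIV. \<Sum>k\<in>UNIV. (\<beta>$j * \<beta>$k) * (if j = k then real CARD('d) + \<kappa> else 0)))"
    unfolding e using W0[OF assms] W1[OF assms] W2[OF assms]
    apply (subst Bochner_Integration.integral_add)
      apply (auto intro!: Bochner_Integration.integrable_add integrable_sum integrable_mult_right)
    done
  also have "\<dots> = \<alpha>^2 * (1 + real CARD('d)) + (real CARD('d) + \<kappa>) * (\<Sum>j\<in>UNIV. (\<beta>$j)^2)"
    by (simp add: if_distrib sum_distrib_left power2_eq_square mult_ac cong: if_cong)
  finally show "(\<integral>u. (\<alpha> + (\<Sum>j\<in>UNIV. \<beta>$j * u$j))^2 * W u \<partial>s)
       = \<alpha>^2 * (1 + real CARD('d)) + (real CARD('d) + \<kappa>) * (\<Sum>j\<in>UNIV. (\<beta>$j)^2)" .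
qed

lemma grad_eq: "GDERIV f x :> D \<Longrightarrow> grad f x = D"
  unfolding grad_def
proof (rule the_equality)
  fix D' assume a: "GDERIV f x :> D" and b: "GDERIV f x :> D'"
  have "(\<lambda>h. h \<bullet> D') = (\<lambda>h. h \<bullet> D)"
    using has_derivative_unique a b unfolding gderiv_def by blast
  then have "(D' - D) \<bullet> D' = (D' - D) \<bullet> D" by metis
  then have "(D' - D) \<bullet> (D' - D) = 0" by (simp add: inner_diff_right)
  then show "D' = D" by simp
qed

definition fq :: "real^'d::finite^'d \<Rightarrow> real^'d \<Rightarrow> real^'d \<Rightarrow> real" where
  "fq M zb z = (1/2) * ((z - zb) \<bullet> (M *v (z - zb)))"

lemma sym_inner: "symmetric_mat M \<Longrightarrow> x \<bullet> (M *v y) = (M *v x) \<bullet> y"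
  unfolding symmetric_mat_def
  by (metis dot_lmul_matrix transpose_transpose vector_transpose_matrix)

lemma fq_deriv:
  assumes "symmetric_mat M"
  shows "GDERIV (fq M zb) z :> M *v (z - zb)"
proof -
  have "((\<lambda>z. (z - zb) \<bullet> (M *v (z - zb))) has_derivative
      (\<lambda>h. h \<bullet> (M *v (z - zb)) + (z - zb) \<bullet> (M *v h))) (at z)"
    by (auto intro!: derivative_eq_intros bounded_linear.has_derivative[OF matrix_vector_mul_bounded_linear]
         simp: matrix_vector_mult_diff_distrib)
  then have "((\<lambda>z. (1/2) * ((z - zb) \<bullet> (M *v (z - zb)))) has_derivative
      (\<lambda>h. (1/2) * (h \<bullet> (M *v (z - zb)) + (z - zb) \<bullet> (M *v h)))) (at z)"
    by (rule has_derivative_mult_right)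
  moreover have "(\<lambda>h. (1/2) * (h \<bullet> (M *v (z - zb)) + (z - zb) \<bullet> (M *v h))) = (\<lambda>h. h \<bullet> (M *v (z - zb)))"
  proof
    fix h show "(1/2) * (h \<bullet> (M *v (z - zb)) + (z - zb) \<bullet> (M *v h)) = h \<bullet> (M *v (z - zb))"
      using sym_inner[OF assms, of "z - zb" h] by (simp add: inner_commute)
  qed
  ultimately show ?thesis unfolding gderiv_def fq_def by simp
qed

lemma bl_mv: "bounded_linear (\<lambda>A::real^'n::finite^'m::finite. A *v u)"
  unfolding linear_conv_bounded_linear[symmetric]
  by (rule linearI) (auto simp: matrix_vector_mult_add_rdistrib scaleR_matrix_vector_assoc)

lemma bl_T: "bounded_linear (\<lambda>w'::(real^'d::finite) \<times> (real^'d^'d). T_aff w' u)"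
  unfolding T_aff_def
  by (intro bounded_linear_add bounded_linear_compose[OF bl_mv bounded_linear_snd] bounded_linear_fst)

lemma mv_inner: "(H *v u) \<bullet> v = H \<bullet> (\<chi> i j. v$i * u$j)"
  for H :: "real^'d::finite^'d"
  by (simp add: inner_vec_def matrix_vector_mult_def sum_distrib_right sum_distrib_left mult_ac)

lemma gradw:
  fixes M :: "real^'d::finite^'d" and u :: "real^'d"
  assumes "symmetric_mat M"
  shows "grad_w (fq M zb) (m, C) u =
     (M *v (C *v u + m - zb), \<chi> i j. (M *v (C *v u + m - zb))$i * u$j)"
proof -
  let ?v = "M *v (C *v u + m - zb)"
  have T: "((\<lambda>w'. T_aff w' u) has_derivative (\<lambda>w'. T_aff w' u)) (at (m, C))"
    by (rule bounded_linear.has_derivative[OF bl_T]) simp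
  have F: "(fq M zb has_derivative (\<lambda>h. h \<bullet> ?v)) (at (T_aff (m, C) u))"
    using fq_deriv[OF assms, of zb "T_aff (m, C) u"] unfolding gderiv_def
    by (simp add: T_aff_def algebra_simps)
  have "((\<lambda>w'. fq M zb (T_aff w' u)) has_derivative (\<lambda>h. T_aff h u \<bullet> ?v)) (at (m, C))"
    using diff_chain_at[OF T F] by (simp add: comp_def)
  moreover have "(\<lambda>h. T_aff h u \<bullet> ?v) = (\<lambda>h. h \<bullet> (?v, \<chi> i j. ?v$i * u$j))"
  proof
    fix h :: "(real^'d) \<times> (real^'d^'d)"
    obtain h1 H where "h = (h1, H)" by (cases h)
    then show "T_aff h u \<bullet> ?v = h \<bullet> (?v, \<chi> i j. ?v$i * u$j)"
      by (simp add: T_aff_def inner_add_left mv_inner)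
  qed
  ultimately have "GDERIV (\<lambda>w'. fq M zb (T_aff w' u)) (m, C) :> (?v, \<chi> i j. ?v$i * u$j)"
    unfolding gderiv_def by simp
  then show ?thesis unfolding grad_w_def by (rule grad_eq)
qed

lemma G_cont: "continuous_on UNIV (\<lambda>u::real^'d::finite. (a + B *v u, \<chi> i j. (a + B *v u)$i * u$j))"
  by (intro continuous_intros linear_continuous_on bl_mv)

lemma norm_sq_vec: "(norm (x::real^'d::finite))^2 = (\<Sum>i\<in>UNIV. (x$i)^2)"
  unfolding power2_norm_eq_inner inner_vec_def by (simp add: power2_eq_square)

lemma norm_sq_mat: "(norm (A::real^'d::finite^'e::finite))^2 = (\<Sum>i\<in>UNIV. \<Sum>j\<in>UNIV. (A$i$j)^2)"
  unfolding power2_norm_eq_inner inner_vec_def by (simp add: power2_eq_square)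

lemma norm_sq_G: "(norm (v, \<chi> i j. v$i * u$j))^2 = (\<Sum>i\<in>UNIV. (v$i)^2 * W u)"
  for v u :: "real^'d::finite"
proof -
  have "(norm (v, \<chi> i j. v$i * u$j))^2 = (norm v)^2 + (norm (\<chi> i j. v$i * u$j :: real^'d^'d))^2"
    by (simp add: norm_Pair)
  also have "\<dots> = (\<Sum>i\<in>UNIV. (v$i)^2) + (\<Sum>i\<in>UNIV. \<Sum>j\<in>UNIV. (v$i)^2 * (u$j * u$j))"
    unfolding norm_sq_vec norm_sq_mat by (simp add: power_mult_distrib) (simp add: power2_eq_square)
  also have "\<dots> = (\<Sum>i\<in>UNIV. (v$i)^2 * W u)"
    by (simp add: W_def sum.distrib algebra_simps sum_distrib_left)
  finally show ?thesis .
qed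

lemma frob_sq: "(frob_norm B)^2 = (\<Sum>i\<in>UNIV. \<Sum>j\<in>UNIV. (B$i$j)^2)"
  unfolding frob_norm_def by (simp add: sum_nonneg)

lemma per_n:
  fixes a :: "real^'d::finite" and B :: "real^'d^'d"
  assumes std: "standardized s \<kappa>"
  shows "integrable s (\<lambda>u. (a + B *v u, \<chi> i j. (a + B *v u)$i * u$j))"
    "integrable s (\<lambda>u. (norm (a + B *v u, \<chi> i j. (a + B *v u)$i * u$j))^2)"
    "(\<integral>u. (norm (a + B *v u, \<chi> i j. (a + B *v u)$i * u$j))^2 \<partial>s)
       = (1 + real CARD('d)) * (norm a)^2 + (real CARD('d) + \<kappa>) * (frob_norm B)^2"
    "(\<integral>u. (a + B *v u, \<chi> i j. (a + B *v u)$i * u$j) \<partial>s) = (a, B)"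
proof -
  interpret prob_space s using std by (simp add: standardized_def)
  have sets: "sets s = sets borel" using std by (simp add: standardized_def)
  define G where "G = (\<lambda>u. (a + B *v u, \<chi> i j. (a + B *v u)$i * u$j))"
  have comp: "(a + B *v u)$i = a$i + (\<Sum>j\<in>UNIV. B$i$j * u$j)" for u i
    by (simp add: matrix_vector_mult_def)
  have nG: "(norm (G u))^2 = (\<Sum>i\<in>UNIV. (a$i + (\<Sum>j\<in>UNIV. (B$i)$j * u$j))^2 * W u)" for u
    unfolding G_def norm_sq_G by (simp add: matrix_vector_mult_def)
  show iN: "integrable s (\<lambda>u. (norm (a + B *v u, \<chi> i j. (a + B *v u)$i * u$j))^2)"
    using nG[unfolded G_def] QW(1)[OF std] by (simp add: integrable_sum)
  have "(\<integral>u. (norm (G u))^2 \<partial>s) = (\<Sum>i\<in>UNIV. (a$i)^2 * (1 + real CARD('d)) + (real CARD('d) + \<kappa>) * (\<Sum>j\<in>UNIV. (B$i$j)^2))"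
    unfolding nG using QW[OF std] by (simp add: integral_sum)
  also have "\<dots> = (1 + real CARD('d)) * (norm a)^2 + (real CARD('d) + \<kappa>) * (frob_norm B)^2"
    unfolding norm_sq_vec frob_sq sum.distrib sum_distrib_left by (simp add: mult.commute)
  finally show "(\<integral>u. (norm (a + B *v u, \<chi> i j. (a + B *v u)$i * u$j))^2 \<partial>s)
       = (1 + real CARD('d)) * (norm a)^2 + (real CARD('d) + \<kappa>) * (frob_norm B)^2"
    unfolding G_def .
  have meas: "G \<in> borel_measurable s"
  proof -
    have "G \<in> borel_measurable borel" unfolding G_def
      by (intro borel_measurable_continuous_onI G_cont)
    thus ?thesis by (subst measurable_cong_sets[OF sets refl])
  qed
  show iG: "integrable s (\<lambda>u. (a + B *v u, \<chi> i j. (a + B *v u)$i * u$j))"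
    unfolding G_def[symmetric]
  proof (rule Bochner_Integration.integrable_bound[where f="\<lambda>u. 1 + (norm (G u))^2"])
    show "integrable s (\<lambda>u. 1 + (norm (G u))^2)" using iN unfolding G_def by simp
    show "G \<in> borel_measurable s" by (rule meas)
    show "AE x in s. norm (G x) \<le> norm (1 + (norm (G x))^2)"
    proof (rule AE_I2)
      fix x
      have "0 \<le> (norm (G x) - 1)^2" by simp
      then have "norm (G x) \<le> 1 + (norm (G x))^2"
        by (simp add: power2_eq_square algebra_simps) (use norm_ge_zero[of "G x"] in linarith)
      then show "norm (G x) \<le> norm (1 + (norm (G x))^2)" by simp
    qed
  qed
  have L1: "(\<integral>u. a$i + (\<Sum>j\<in>UNIV. B$i$j * u$j) \<partial>s) = a$i" for i
    using mom1[OF std] by (subst Bochner_Integration.integral_add) (auto simp: integral_sum prob_space)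
  have L2: "(\<integral>u. (a$i + (\<Sum>k\<in>UNIV. B$i$k * u$k)) * u$j \<partial>s) = B$i$j" for i j
  proof -
    have "(\<integral>u. (a$i + (\<Sum>k\<in>UNIV. B$i$k * u$k)) * u$j \<partial>s)
       = (\<integral>u. a$i * u$j + (\<Sum>k\<in>UNIV. B$i$k * (u$k * u$j)) \<partial>s)"
      by (intro Bochner_Integration.integral_cong refl) (simp add: distrib_right sum_distrib_right mult.assoc)
    also have "\<dots> = (\<Sum>k\<in>UNIV. B$i$k * (if k = j then 1 else 0))"
      using mom1[OF std] mom2[OF std] by (subst Bochner_Integration.integral_add) (auto simp: integral_sum)
    also have "\<dots> = B$i$j" by (simp add: if_distrib cong: if_cong)
    finally show ?thesis .
  qed
  have fstI: "fst (\<integral>u. G u \<partial>s) $ i = a$i" for i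
  proof -
    have "fst (\<integral>u. G u \<partial>s) $ i = (\<integral>u. fst (G u) $ i \<partial>s)"
      by (rule integral_bounded_linear[OF bounded_linear_compose[OF bounded_linear_vec_nth bounded_linear_fst] iG[folded G_def], symmetric])
    also have "\<dots> = a$i" unfolding G_def using L1 by (simp add: matrix_vector_mult_def)
    finally show ?thesis .
  qed
  have sndI: "snd (\<integral>u. G u \<partial>s) $ i $ j = B$i$j" for i j
  proof -
    have "snd (\<integral>u. G u \<partial>s) $ i $ j = (\<integral>u. snd (G u) $ i $ j \<partial>s)"
      by (rule integral_bounded_linear[OF bounded_linear_compose[OF bounded_linear_vec_nth
             bounded_linear_compose[OF bounded_linear_vec_nth bounded_linear_snd]] iG[folded G_def], symmetric])
    also have "\<dots> = B$i$j" unfolding G_def using L2 by (simp add: matrix_vector_mult_def)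
    finally show ?thesis .
  qed
  show "(\<integral>u. (a + B *v u, \<chi> i j. (a + B *v u)$i * u$j) \<partial>s) = (a, B)"
    unfolding G_def[symmetric] using fstI sndI by (simp add: prod_eq_iff vec_eq_iff)
qed

lemma jensen_sq:
  fixes p y :: "'k::finite \<Rightarrow> real"
  assumes "sum p UNIV = 1" "\<And>n. p n \<ge> 0"
  shows "(\<Sum>n\<in>UNIV. p n * y n)^2 \<le> (\<Sum>n\<in>UNIV. p n * (y n)^2)"
proof -
  define m where "m = (\<Sum>n\<in>UNIV. p n * y n)"
  have "(\<Sum>n\<in>UNIV. p n * (y n - m)^2) = (\<Sum>n\<in>UNIV. p n * (y n)^2) - 2 * m * (\<Sum>n\<in>UNIV. p n * y n) + m^2 * sum p UNIV"
    by (simp add: power2_diff algebra_simps sum.distrib sum_subtractf sum_distrib_left sum_distrib_right)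
  also have "\<dots> = (\<Sum>n\<in>UNIV. p n * (y n)^2) - m^2"
    using assms by (simp add: m_def power2_eq_square)
  finally have e: "(\<Sum>n\<in>UNIV. p n * (y n - m)^2) = (\<Sum>n\<in>UNIV. p n * (y n)^2) - m^2" .
  have "0 \<le> (\<Sum>n\<in>UNIV. p n * (y n - m)^2)"
    using assms(2) by (intro sum_nonneg mult_nonneg_nonneg) auto
  then show ?thesis using e m_def by simp
qed

lemma cs_norm:
  fixes x :: "'k::finite \<Rightarrow> 'a::real_normed_vector"
  assumes "sum p UNIV = 1" "\<And>n. p n > 0"
  shows "(norm (\<Sum>n\<in>UNIV. x n))^2 \<le> (\<Sum>n\<in>UNIV. (norm (x n))^2 / p n)"
proof -
  have "norm (\<Sum>n\<in>UNIV. x n) \<le> (\<Sum>n\<in>UNIV. norm (x n))" by (rule norm_sum)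
  also have "\<dots> = (\<Sum>n\<in>UNIV. p n * (norm (x n) / p n))"
    using assms(2) by (intro sum.cong refl) (simp add: less_imp_neq[symmetric])
  finally have a: "norm (\<Sum>n\<in>UNIV. x n) \<le> (\<Sum>n\<in>UNIV. p n * (norm (x n) / p n))" .
  have "(norm (\<Sum>n\<in>UNIV. x n))^2 \<le> (\<Sum>n\<in>UNIV. p n * (norm (x n) / p n))^2"
    using a by (intro power_mono) auto
  also have "\<dots> \<le> (\<Sum>n\<in>UNIV. p n * (norm (x n) / p n)^2)"
    using assms by (intro jensen_sq) (auto simp: less_imp_le)
  also have "\<dots> = (\<Sum>n\<in>UNIV. (norm (x n))^2 / p n)"
    using assms(2) by (intro sum.cong refl) (simp add: power2_eq_square less_imp_neq[symmetric])
  finally show ?thesis .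
qed

lemma est_eq:
  fixes M C :: "real^'d::finite^'d"
  shows "M *v (C *v u + m - zb) = M *v (m - zb) + (M ** C) *v u"
proof -
  have "C *v u + m - zb = (m - zb) + C *v u" by simp
  then show ?thesis by (simp only: matrix_vector_right_distrib matrix_vector_mul_assoc)
qed

theorem theorem4:
  fixes M :: "'k::finite \<Rightarrow> real^'d^'d" and zbar :: "'k \<Rightarrow> real^'d"
  assumes "\<forall>n. symmetric_mat (M n)"
  shows "\<exists>f :: 'k \<Rightarrow> real^'d \<Rightarrow> real.
    (\<forall>n. (\<forall>z. f n differentiable (at z)) \<and> matrix_smooth (M n) (f n) \<and> grad (f n) (zbar n) = 0) \<and>
    (\<forall>s \<kappa> p m C. standardized s \<kappa> \<and> pos_distribution p \<longrightarrow>
       (\<forall>n. integrable s (\<lambda>u. estimator f p (m, C) u n) \<and>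
            integrable s (\<lambda>u. (norm (estimator f p (m, C) u n))^2)) \<and>
       trace_var s p (estimator f p (m, C)) \<ge>
         (\<Sum>n\<in>UNIV. (1 / p n) * (real CARD('d) * (norm (M n *v (m - zbar n)))^2
            + (real CARD('d) + \<kappa> - 1) * (frob_norm (M n ** C))^2)))"
proof (intro exI[of _ "\<lambda>n. fq (M n) (zbar n)"] conjI allI impI)
  fix n
  have gd: "\<And>z. GDERIV (fq (M n) (zbar n)) z :> M n *v (z - zbar n)"
    using assms fq_deriv by blast
  then have gr: "\<And>z. grad (fq (M n) (zbar n)) z = M n *v (z - zbar n)"
    by (rule grad_eq)
  show "\<And>z. fq (M n) (zbar n) differentiable (at z)"
    using gd unfolding gderiv_def by (auto intro: differentiableI)
  show "matrix_smooth (M n) (fq (M n) (zbar n))"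
    unfolding matrix_smooth_def gr by (simp add: matrix_vector_mult_diff_distrib[symmetric])
  show "grad (fq (M n) (zbar n)) (zbar n) = 0" unfolding gr by simp
next
  fix s :: "(real^'d) measure" and \<kappa> :: real and p :: "'k \<Rightarrow> real" and m :: "real^'d" and C :: "real^'d^'d"
  assume A: "standardized s \<kappa> \<and> pos_distribution p"
  then have std: "standardized s \<kappa>" and ppos: "\<And>n. p n > 0" and psum: "sum p UNIV = 1"
    by (auto simp: pos_distribution_def)
  define a where "a n = M n *v (m - zbar n)" for n
  define B where "B n = M n ** C" for n
  define G where "G n u = (a n + B n *v u, \<chi> i j. (a n + B n *v u)$i * u$j)" for n u
  have est: "estimator (\<lambda>n. fq (M n) (zbar n)) p (m, C) u n = (1 / p n) *\<^sub>R G n u" for u n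
    unfolding estimator_def gradw[OF assms[rule_format]] G_def a_def B_def est_eq ..
  have iG: "integrable s (G n)" and iN: "integrable s (\<lambda>u. (norm (G n u))^2)"
    and EN: "(\<integral>u. (norm (G n u))^2 \<partial>s) = (1 + real CARD('d)) * (norm (a n))^2 + (real CARD('d) + \<kappa>) * (frob_norm (B n))^2"
    and EG: "(\<integral>u. G n u \<partial>s) = (a n, B n)" for n
    unfolding G_def using per_n[OF std] by auto
  show "integrable s (\<lambda>u. estimator (\<lambda>n. fq (M n) (zbar n)) p (m, C) u n)" for n
    unfolding est using iG by (auto intro!: integrable_scaleR_right)
  show "integrable s (\<lambda>u. (norm (estimator (\<lambda>n. fq (M n) (zbar n)) p (m, C) u n))^2)" for n
    unfolding est using iN by (auto intro!: integrable_divide simp: power_divide)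
  have tv: "trace_var s p (estimator (\<lambda>n. fq (M n) (zbar n)) p (m, C)) =
     (\<Sum>n\<in>UNIV. ((1 + real CARD('d)) * (norm (a n))^2 + (real CARD('d) + \<kappa>) * (frob_norm (B n))^2) / p n)
     - (norm (\<Sum>n\<in>UNIV. (a n, B n)))^2"
  proof -
    have 1: "p n * (\<integral>u. (norm ((1 / p n) *\<^sub>R G n u))^2 \<partial>s)
       = ((1 + real CARD('d)) * (norm (a n))^2 + (real CARD('d) + \<kappa>) * (frob_norm (B n))^2) / p n" for n
    proof -
      have "(\<integral>u. (norm ((1 / p n) *\<^sub>R G n u))^2 \<partial>s) = (\<integral>u. (norm (G n u))^2 / (p n)^2 \<partial>s)"
        using ppos[of n] by (simp add: power_divide)
      also have "\<dots> = (\<integral>u. (norm (G n u))^2 \<partial>s) / (p n)^2" by (rule integral_divide_zero)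
      finally show ?thesis unfolding EN using ppos[of n] by (simp add: power2_eq_square field_simps)
    qed
    have 2: "p n *\<^sub>R (\<integral>u. (1 / p n) *\<^sub>R G n u \<partial>s) = (a n, B n)" for n
      using ppos[of n] by (simp add: EG)
    show ?thesis unfolding trace_var_def est 1 2 ..
  qed
  have nAB: "(norm (a n, B n))^2 = (norm (a n))^2 + (frob_norm (B n))^2" for n
    by (simp add: norm_Pair norm_sq_mat frob_sq sum_nonneg add_nonneg_nonneg)
  have "(norm (\<Sum>n\<in>UNIV. (a n, B n)))^2 \<le> (\<Sum>n\<in>UNIV. ((norm (a n))^2 + (frob_norm (B n))^2) / p n)"
    using cs_norm[OF psum ppos, of "\<lambda>n. (a n, B n)"] by (simp add: nAB)
  then have "trace_var s p (estimator (\<lambda>n. fq (M n) (zbar n)) p (m, C)) \<ge>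
     (\<Sum>n\<in>UNIV. ((1 + real CARD('d)) * (norm (a n))^2 + (real CARD('d) + \<kappa>) * (frob_norm (B n))^2) / p n)
     - (\<Sum>n\<in>UNIV. ((norm (a n))^2 + (frob_norm (B n))^2) / p n)"
    unfolding tv by linarith
  also have "(\<Sum>n\<in>UNIV. ((1 + real CARD('d)) * (norm (a n))^2 + (real CARD('d) + \<kappa>) * (frob_norm (B n))^2) / p n)
     - (\<Sum>n\<in>UNIV. ((norm (a n))^2 + (frob_norm (B n))^2) / p n)
     = (\<Sum>n\<in>UNIV. (1 / p n) * (real CARD('d) * (norm (M n *v (m - zbar n)))^2
            + (real CARD('d) + \<kappa> - 1) * (frob_norm (M n ** C))^2))"
    unfolding sum_subtractf[symmetric] a_def[symmetric] B_def[symmetric]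
    using ppos by (intro sum.cong refl) (simp add: field_simps less_imp_neq[OF ppos, symmetric])
  finally show "trace_var s p (estimator (\<lambda>n. fq (M n) (zbar n)) p (m, C)) \<ge>
     (\<Sum>n\<in>UNIV. (1 / p n) * (real CARD('d) * (norm (M n *v (m - zbar n)))^2
            + (real CARD('d) + \<kappa> - 1) * (frob_norm (M n ** C))^2))" .
qed

end
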